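(* The undirected graph $G^*_u$ defined in the context is perfect.
   Context: Consider the three-receiver unicast index coding problem with 12 messages indexed by $[12]$, where receiver $u_i$ demands the messages indexed by $W_i$ and knows those indexed by $K_i$: $W_1=\{1,2,3,4\}$, $W_2=\{5,6,7,8\}$, $W_3=\{9,10,11,12\}$, $K_1=\{5,6,9,10\}$, $K_2=\{1,2,9,11\}$, $K_3=\{1,3,5,7\}$. $G^*$ is the directed graph on vertex set $[12]$ with a directed edge $(a,b)$ iff $b\in K_i$, where $i$ is the unique index with $a\in W_i$. $G^*_u$ is the undirected graph on $[12]$ in which $\{a,b\}$ is an edge iff both $(a,b)$ and $(b,a)$ are edges of $G^*$. An undirected graph is perfect if for every induced subgraph $H$, the independence number of $H$ equals its clique cover number. *)

theory Defs
  imports Main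
begin

definition W :: "nat \<Rightarrow> nat set" where
  "W i = (if i = 1 then {1,2,3,4} else if i = 2 then {5,6,7,8}
          else if i = 3 then {9,10,11,12} else {})"

definition K :: "nat \<Rightarrow> nat set" where
  "K i = (if i = 1 then {5,6,9,10} else if i = 2 then {1,2,9,11}
          else if i = 3 then {1,3,5,7} else {})"

definition Gstar_edge :: "nat \<Rightarrow> nat \<Rightarrow> bool" where
  "Gstar_edge a b \<longleftrightarrow> a \<in> {1..12} \<and> b \<in> {1..12} \<and>
     (\<exists>i\<in>{1,2,3}. a \<in> W i \<and> b \<in> K i)"

definition Gu_edge :: "nat \<Rightarrow> nat \<Rightarrow> bool" where
  "Gu_edge a b \<longleftrightarrow> Gstar_edge a b \<and> Gstar_edge b a"

definition Gu_vertices :: "nat set" where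
  "Gu_vertices = {1..12}"

definition indep_set :: "('a \<Rightarrow> 'a \<Rightarrow> bool) \<Rightarrow> 'a set \<Rightarrow> 'a set \<Rightarrow> bool" where
  "indep_set E S T \<longleftrightarrow> T \<subseteq> S \<and> (\<forall>x\<in>T. \<forall>y\<in>T. x \<noteq> y \<longrightarrow> \<not> E x y)"

definition is_clique :: "('a \<Rightarrow> 'a \<Rightarrow> bool) \<Rightarrow> 'a set \<Rightarrow> bool" where
  "is_clique E C \<longleftrightarrow> (\<forall>x\<in>C. \<forall>y\<in>C. x \<noteq> y \<longrightarrow> E x y)"

definition independence_number :: "('a \<Rightarrow> 'a \<Rightarrow> bool) \<Rightarrow> 'a set \<Rightarrow> nat" where
  "independence_number E S = Max {card T | T. indep_set E S T}"

definition clique_cover :: "('a \<Rightarrow> 'a \<Rightarrow> bool) \<Rightarrow> 'a set \<Rightarrow> 'a set set \<Rightarrow> bool" where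
  "clique_cover E S P \<longleftrightarrow> finite P \<and> (\<forall>C\<in>P. C \<subseteq> S \<and> is_clique E C) \<and> \<Union>P = S"

definition clique_cover_number :: "('a \<Rightarrow> 'a \<Rightarrow> bool) \<Rightarrow> 'a set \<Rightarrow> nat" where
  "clique_cover_number E S = (LEAST n. \<exists>P. clique_cover E S P \<and> card P = n)"

definition perfect :: "'a set \<Rightarrow> ('a \<Rightarrow> 'a \<Rightarrow> bool) \<Rightarrow> bool" where
  "perfect V E \<longleftrightarrow> (\<forall>S\<subseteq>V. independence_number E S = clique_cover_number E S)"

end

theory Submission
  imports Defs
begin

lemma alpha_fin:
  assumes "finite S"
  shows "finite {card T | T. indep_set E S T}"
proof -
  have "{card T | T. indep_set E S T} \<subseteq> card ` Pow S"
    by (auto simp: indep_set_def)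
  then show ?thesis using assms finite_subset by blast
qed

lemma alpha_ge:
  assumes "finite S" "indep_set E S T"
  shows "card T \<le> independence_number E S"
  unfolding independence_number_def
  using alpha_fin[OF assms(1)] assms(2) by (auto intro: Max_ge)

lemma alpha_ex:
  assumes "finite S"
  shows "\<exists>T. indep_set E S T \<and> card T = independence_number E S"
proof -
  have ne: "{card T | T. indep_set E S T} \<noteq> {}"
    by (auto simp: indep_set_def)
  have "independence_number E S \<in> {card T | T. indep_set E S T}"
    unfolding independence_number_def
    using Max_in[OF alpha_fin[OF assms] ne] .
  then show ?thesis by auto
qed

lemma theta_le:
  assumes "clique_cover E S P"
  shows "clique_cover_number E S \<le> card P"
  unfolding clique_cover_number_def
  using assms by (auto intro: Least_le)

lemma theta_ex:
  assumes "finite S"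
  shows "\<exists>P. clique_cover E S P \<and> card P = clique_cover_number E S"
proof -
  have "clique_cover E S ((\<lambda>x. {x}) ` S)"
    using assms by (auto simp: clique_cover_def is_clique_def)
  then have "\<exists>P. clique_cover E S P \<and> card P = card ((\<lambda>x. {x}) ` S)" by blast
  then show ?thesis
    unfolding clique_cover_number_def
    by (rule LeastI[where P="\<lambda>n. \<exists>P. clique_cover E S P \<and> card P = n"])
qed

lemma weak_dual:
  assumes "indep_set E S T" "clique_cover E S P"
  shows "card T \<le> card P"
proof -
  define f where "f x = (SOME C. C \<in> P \<and> x \<in> C)" for x
  have f: "f x \<in> P \<and> x \<in> f x" if "x \<in> T" for x
  proof -
    have "x \<in> \<Union>P" using assms that by (auto simp: indep_set_def clique_cover_def)
    then have "\<exists>C. C \<in> P \<and> x \<in> C" by auto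
    then show ?thesis unfolding f_def by (rule someI_ex)
  qed
  have "inj_on f T"
  proof (rule inj_onI)
    fix x y assume xy: "x \<in> T" "y \<in> T" "f x = f y"
    show "x = y"
    proof (rule ccontr)
      assume "x \<noteq> y"
      have "is_clique E (f x)" using f[OF xy(1)] assms(2) by (auto simp: clique_cover_def)
      then have "E x y" using f[OF xy(1)] f[OF xy(2)] xy(3) \<open>x \<noteq> y\<close>
        by (auto simp: is_clique_def)
      then show False using assms(1) xy \<open>x \<noteq> y\<close> by (auto simp: indep_set_def)
    qed
  qed
  moreover have "f ` T \<subseteq> P" using f by auto
  moreover have "finite P" using assms(2) by (simp add: clique_cover_def)
  ultimately show ?thesis by (rule card_inj_on_le)
qed

lemma alpha_le_theta:
  assumes "finite S"
  shows "independence_number E S \<le> clique_cover_number E S"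
  using alpha_ex[OF assms, of E] theta_ex[OF assms, of E] weak_dual by metis

lemma eq_witness:
  assumes "finite S" "indep_set E S T" "clique_cover E S P" "card T = card P"
  shows "independence_number E S = clique_cover_number E S"
  using alpha_ge[OF assms(1,2)] theta_le[OF assms(3)] alpha_le_theta[OF assms(1), of E] assms(4)
  by linarith

lemma eq_witness2:
  assumes "finite S" "indep_set E S T" "clique_cover E S (set Ps)" "length Ps \<le> card T"
  shows "independence_number E S = clique_cover_number E S"
proof -
  have "card (set Ps) \<le> card T" using card_length[of Ps] assms(4) by linarith
  then show ?thesis
    using alpha_ge[OF assms(1,2)] theta_le[OF assms(3)] alpha_le_theta[OF assms(1), of E] by linarith
qed

lemma ruleA:
  assumes fin: "finite S" and v: "v \<in> S" and sym: "\<And>a b. E a b \<Longrightarrow> E b a"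
    and cl: "is_clique E (insert v {a\<in>S. E v a})"
    and IH: "independence_number E (S - insert v {a\<in>S. E v a})
           = clique_cover_number E (S - insert v {a\<in>S. E v a})"
  shows "independence_number E S = clique_cover_number E S"
proof -
  define C where "C = insert v {a\<in>S. E v a}"
  define S' where "S' = S - C"
  have finS': "finite S'" using fin by (simp add: S'_def)
  obtain T' where T': "indep_set E S' T'" "card T' = independence_number E S'"
    using alpha_ex[OF finS'] by blast
  obtain P' where P': "clique_cover E S' P'" "card P' = clique_cover_number E S'"
    using theta_ex[OF finS'] by blast
  have vT': "v \<notin> T'" using T'(1) by (auto simp: indep_set_def S'_def C_def)
  have finT': "finite T'" using T'(1) finS' by (auto simp: indep_set_def intro: finite_subset)
  have "indep_set E S (insert v T')"
    using T'(1) v sym unfolding indep_set_def S'_def C_def by blast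
  then have "card (insert v T') \<le> independence_number E S" using alpha_ge fin by blast
  then have a: "independence_number E S' + 1 \<le> independence_number E S"
    using vT' finT' T'(2) by simp
  have "clique_cover E S (insert C P')"
    using P'(1) cl v unfolding clique_cover_def S'_def C_def by auto
  then have "clique_cover_number E S \<le> card (insert C P')" by (rule theta_le)
  also have "\<dots> \<le> card P' + 1" by (simp add: card_insert_le_m1)
  finally have "clique_cover_number E S \<le> clique_cover_number E S' + 1" using P'(2) by simp
  then show ?thesis using a IH alpha_le_theta[OF fin, of E] unfolding S'_def C_def by linarith
qed


lemma range12: "x \<in> {1..12::nat} \<longleftrightarrow> x=1 \<or> x=2 \<or> x=3 \<or> x=4 \<or> x=5 \<or> x=6 \<or> x=7 \<or> x=8 \<or> x=9 \<or> x=10 \<or> x=11 \<or> x=12"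
  unfolding atLeastAtMost_iff by presburger
lemma Gstar_iff: "Gstar_edge a b \<longleftrightarrow>
   (a \<in> {1,2,3,4} \<and> b \<in> {5,6,9,10}) \<or> (a \<in> {5,6,7,8} \<and> b \<in> {1,2,9,11}) \<or> (a \<in> {9,10,11,12} \<and> b \<in> {1,3,5,7})"
  unfolding Gstar_edge_def W_def K_def range12 by auto
lemma Gu_edge_iff: "Gu_edge a b \<longleftrightarrow>
  (a=1 \<and> b=5) \<or> (a=1 \<and> b=6) \<or> (a=1 \<and> b=9) \<or> (a=1 \<and> b=10) \<or> (a=2 \<and> b=5) \<or> (a=2 \<and> b=6) \<or>
  (a=3 \<and> b=9) \<or> (a=3 \<and> b=10) \<or> (a=5 \<and> b=9) \<or> (a=5 \<and> b=11) \<or> (a=7 \<and> b=9) \<or> (a=7 \<and> b=11) \<or>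
  (b=1 \<and> a=5) \<or> (b=1 \<and> a=6) \<or> (b=1 \<and> a=9) \<or> (b=1 \<and> a=10) \<or> (b=2 \<and> a=5) \<or> (b=2 \<and> a=6) \<or>
  (b=3 \<and> a=9) \<or> (b=3 \<and> a=10) \<or> (b=5 \<and> a=9) \<or> (b=5 \<and> a=11) \<or> (b=7 \<and> a=9) \<or> (b=7 \<and> a=11)"
proof (cases "a \<in> {1..12}")
  case True
  then show ?thesis unfolding range12
    by (elim disjE; auto simp add: Gu_edge_def Gstar_iff)
next
  case False
  then have "\<not> Gu_edge a b" unfolding Gu_edge_def Gstar_edge_def by blast
  then show ?thesis using False by auto
qed
lemma Gu_sym: "Gu_edge a b \<Longrightarrow> Gu_edge b a"
  by (auto simp: Gu_edge_def)

definition simpl :: "nat set \<Rightarrow> nat \<Rightarrow> bool" where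
  "simpl S v \<longleftrightarrow> v \<in> S \<and> is_clique Gu_edge (insert v {a\<in>S. Gu_edge v a})"


lemma simpl_intro:
  assumes "v \<in> S" "\<And>a. a \<in> S \<Longrightarrow> Gu_edge v a \<Longrightarrow> a \<in> X" "is_clique Gu_edge (insert v X)"
  shows "simpl S v"
  using assms unfolding simpl_def is_clique_def by blast

lemma nb1: "Gu_edge 1 a \<Longrightarrow> a=5 \<or> a=6 \<or> a=9 \<or> a=10" by (auto simp: Gu_edge_iff)
lemma nb2: "Gu_edge 2 a \<Longrightarrow> a=5 \<or> a=6" by (auto simp: Gu_edge_iff)
lemma nb3: "Gu_edge 3 a \<Longrightarrow> a=9 \<or> a=10" by (auto simp: Gu_edge_iff)
lemma nb4: "Gu_edge 4 a \<Longrightarrow> False" by (auto simp: Gu_edge_iff)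
lemma nb5: "Gu_edge 5 a \<Longrightarrow> a=1 \<or> a=2 \<or> a=9 \<or> a=11" by (auto simp: Gu_edge_iff)
lemma nb6: "Gu_edge 6 a \<Longrightarrow> a=1 \<or> a=2" by (auto simp: Gu_edge_iff)
lemma nb7: "Gu_edge 7 a \<Longrightarrow> a=9 \<or> a=11" by (auto simp: Gu_edge_iff)
lemma nb8: "Gu_edge 8 a \<Longrightarrow> False" by (auto simp: Gu_edge_iff)
lemma nb9: "Gu_edge 9 a \<Longrightarrow> a=1 \<or> a=3 \<or> a=5 \<or> a=7" by (auto simp: Gu_edge_iff)
lemma nb10: "Gu_edge 10 a \<Longrightarrow> a=1 \<or> a=3" by (auto simp: Gu_edge_iff)
lemma nb11: "Gu_edge 11 a \<Longrightarrow> a=5 \<or> a=7" by (auto simp: Gu_edge_iff)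
lemma nb12: "Gu_edge 12 a \<Longrightarrow> False" by (auto simp: Gu_edge_iff)

lemma decomp:
  assumes "S \<subseteq> {1..12::nat}"
  shows "S = (if 1 \<in> S then {1} else {}) \<union> (if 2 \<in> S then {2} else {}) \<union> (if 3 \<in> S then {3} else {})
    \<union> (if 4 \<in> S then {4} else {}) \<union> (if 5 \<in> S then {5} else {}) \<union> (if 6 \<in> S then {6} else {})
    \<union> (if 7 \<in> S then {7} else {}) \<union> (if 8 \<in> S then {8} else {}) \<union> (if 9 \<in> S then {9} else {})
    \<union> (if 10 \<in> S then {10} else {}) \<union> (if 11 \<in> S then {11} else {}) \<union> (if 12 \<in> S then {12} else {})"
  (is "S = ?R")
proof
  show "S \<subseteq> ?R"
  proof
    fix x assume "x \<in> S"
    then have "x=1 \<or> x=2 \<or> x=3 \<or> x=4 \<or> x=5 \<or> x=6 \<or> x=7 \<or> x=8 \<or> x=9 \<or> x=10 \<or> x=11 \<or> x=12"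
      using assms range12 by blast
    then show "x \<in> ?R" using \<open>x \<in> S\<close> by (elim disjE) simp_all
  qed
qed auto
lemma cases12:
  assumes "S \<subseteq> {1..12}" and ns: "\<And>v. \<not> simpl S v"
  shows "S = {} \<or> S = {1,2,5,6} \<or> S = {1,3,9,10} \<or> S = {5,7,9,11} \<or> S = {1,2,3,5,6,9,10}
    \<or> S = {1,2,5,6,7,9,11} \<or> S = {1,3,5,7,9,10,11} \<or> S = {1,2,3,5,6,7,9,10,11}"
proof -
  have mem: "x \<in> S \<Longrightarrow> x=1 \<or> x=2 \<or> x=3 \<or> x=4 \<or> x=5 \<or> x=6 \<or> x=7 \<or> x=8 \<or> x=9 \<or> x=10 \<or> x=11 \<or> x=12" for x
    using assms(1) range12 by blast
  have s1: "4 \<notin> S"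
  proof
    assume "4 \<in> S"
    have "simpl S 4"
    proof (rule simpl_intro[where X="{}"])
      show "is_clique Gu_edge (insert 4 {})" by (simp add: is_clique_def Gu_edge_iff)
    qed (use \<open>4 \<in> S\<close>  nb4 in auto)
    then show False using ns by blast
  qed
  have s2: "8 \<notin> S"
  proof
    assume "8 \<in> S"
    have "simpl S 8"
    proof (rule simpl_intro[where X="{}"])
      show "is_clique Gu_edge (insert 8 {})" by (simp add: is_clique_def Gu_edge_iff)
    qed (use \<open>8 \<in> S\<close>  nb8 in auto)
    then show False using ns by blast
  qed
  have s3: "12 \<notin> S"
  proof
    assume "12 \<in> S"
    have "simpl S 12"
    proof (rule simpl_intro[where X="{}"])
      show "is_clique Gu_edge (insert 12 {})" by (simp add: is_clique_def Gu_edge_iff)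
    qed (use \<open>12 \<in> S\<close>  nb12 in auto)
    then show False using ns by blast
  qed
  have s4: "2 \<notin> S" if "6 \<notin> S"
  proof
    assume "2 \<in> S"
    have "simpl S 2"
    proof (rule simpl_intro[where X="{5}"])
      show "is_clique Gu_edge (insert 2 {5})" by (simp add: is_clique_def Gu_edge_iff)
    qed (use \<open>2 \<in> S\<close> that nb2 in auto)
    then show False using ns by blast
  qed
  have s5: "2 \<notin> S" if "5 \<notin> S"
  proof
    assume "2 \<in> S"
    have "simpl S 2"
    proof (rule simpl_intro[where X="{6}"])
      show "is_clique Gu_edge (insert 2 {6})" by (simp add: is_clique_def Gu_edge_iff)
    qed (use \<open>2 \<in> S\<close> that nb2 in auto)
    then show False using ns by blast
  qed
  have s6: "6 \<notin> S" if "2 \<notin> S"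
  proof
    assume "6 \<in> S"
    have "simpl S 6"
    proof (rule simpl_intro[where X="{1}"])
      show "is_clique Gu_edge (insert 6 {1})" by (simp add: is_clique_def Gu_edge_iff)
    qed (use \<open>6 \<in> S\<close> that nb6 in auto)
    then show False using ns by blast
  qed
  have s7: "6 \<notin> S" if "1 \<notin> S"
  proof
    assume "6 \<in> S"
    have "simpl S 6"
    proof (rule simpl_intro[where X="{2}"])
      show "is_clique Gu_edge (insert 6 {2})" by (simp add: is_clique_def Gu_edge_iff)
    qed (use \<open>6 \<in> S\<close> that nb6 in auto)
    then show False using ns by blast
  qed
  have s8: "3 \<notin> S" if "10 \<notin> S"
  proof
    assume "3 \<in> S"
    have "simpl S 3"
    proof (rule simpl_intro[where X="{9}"])
      show "is_clique Gu_edge (insert 3 {9})" by (simp add: is_clique_def Gu_edge_iff)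
    qed (use \<open>3 \<in> S\<close> that nb3 in auto)
    then show False using ns by blast
  qed
  have s9: "3 \<notin> S" if "9 \<notin> S"
  proof
    assume "3 \<in> S"
    have "simpl S 3"
    proof (rule simpl_intro[where X="{10}"])
      show "is_clique Gu_edge (insert 3 {10})" by (simp add: is_clique_def Gu_edge_iff)
    qed (use \<open>3 \<in> S\<close> that nb3 in auto)
    then show False using ns by blast
  qed
  have s10: "10 \<notin> S" if "3 \<notin> S"
  proof
    assume "10 \<in> S"
    have "simpl S 10"
    proof (rule simpl_intro[where X="{1}"])
      show "is_clique Gu_edge (insert 10 {1})" by (simp add: is_clique_def Gu_edge_iff)
    qed (use \<open>10 \<in> S\<close> that nb10 in auto)
    then show False using ns by blast
  qed
  have s11: "10 \<notin> S" if "1 \<notin> S"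
  proof
    assume "10 \<in> S"
    have "simpl S 10"
    proof (rule simpl_intro[where X="{3}"])
      show "is_clique Gu_edge (insert 10 {3})" by (simp add: is_clique_def Gu_edge_iff)
    qed (use \<open>10 \<in> S\<close> that nb10 in auto)
    then show False using ns by blast
  qed
  have s12: "7 \<notin> S" if "11 \<notin> S"
  proof
    assume "7 \<in> S"
    have "simpl S 7"
    proof (rule simpl_intro[where X="{9}"])
      show "is_clique Gu_edge (insert 7 {9})" by (simp add: is_clique_def Gu_edge_iff)
    qed (use \<open>7 \<in> S\<close> that nb7 in auto)
    then show False using ns by blast
  qed
  have s13: "7 \<notin> S" if "9 \<notin> S"
  proof
    assume "7 \<in> S"
    have "simpl S 7"
    proof (rule simpl_intro[where X="{11}"])
      show "is_clique Gu_edge (insert 7 {11})" by (simp add: is_clique_def Gu_edge_iff)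
    qed (use \<open>7 \<in> S\<close> that nb7 in auto)
    then show False using ns by blast
  qed
  have s14: "11 \<notin> S" if "7 \<notin> S"
  proof
    assume "11 \<in> S"
    have "simpl S 11"
    proof (rule simpl_intro[where X="{5}"])
      show "is_clique Gu_edge (insert 11 {5})" by (simp add: is_clique_def Gu_edge_iff)
    qed (use \<open>11 \<in> S\<close> that nb11 in auto)
    then show False using ns by blast
  qed
  have s15: "11 \<notin> S" if "5 \<notin> S"
  proof
    assume "11 \<in> S"
    have "simpl S 11"
    proof (rule simpl_intro[where X="{7}"])
      show "is_clique Gu_edge (insert 11 {7})" by (simp add: is_clique_def Gu_edge_iff)
    qed (use \<open>11 \<in> S\<close> that nb11 in auto)
    then show False using ns by blast
  qed
  have s16: "1 \<notin> S" if "6 \<notin> S" "10 \<notin> S"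
  proof
    assume "1 \<in> S"
    have "simpl S 1"
    proof (rule simpl_intro[where X="{5,9}"])
      show "is_clique Gu_edge (insert 1 {5,9})" by (simp add: is_clique_def Gu_edge_iff)
    qed (use \<open>1 \<in> S\<close> that nb1 in auto)
    then show False using ns by blast
  qed
  have s17: "5 \<notin> S" if "2 \<notin> S" "11 \<notin> S"
  proof
    assume "5 \<in> S"
    have "simpl S 5"
    proof (rule simpl_intro[where X="{1,9}"])
      show "is_clique Gu_edge (insert 5 {1,9})" by (simp add: is_clique_def Gu_edge_iff)
    qed (use \<open>5 \<in> S\<close> that nb5 in auto)
    then show False using ns by blast
  qed
  have s18: "9 \<notin> S" if "3 \<notin> S" "7 \<notin> S"
  proof
    assume "9 \<in> S"
    have "simpl S 9"
    proof (rule simpl_intro[where X="{1,5}"])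
      show "is_clique Gu_edge (insert 9 {1,5})" by (simp add: is_clique_def Gu_edge_iff)
    qed (use \<open>9 \<in> S\<close> that nb9 in auto)
    then show False using ns by blast
  qed
  have n4: "4 \<notin> S" and n8: "8 \<notin> S" and n12: "12 \<notin> S" using s1 s2 s3 .
  have c2: "2 \<in> S \<Longrightarrow> 5 \<in> S \<and> 6 \<in> S" using s4 s5 by blast
  have c6: "6 \<in> S \<Longrightarrow> 1 \<in> S \<and> 2 \<in> S" using s6 s7 by blast
  have c3: "3 \<in> S \<Longrightarrow> 9 \<in> S \<and> 10 \<in> S" using s8 s9 by blast
  have c10: "10 \<in> S \<Longrightarrow> 1 \<in> S \<and> 3 \<in> S" using s10 s11 by blast
  have c7: "7 \<in> S \<Longrightarrow> 9 \<in> S \<and> 11 \<in> S" using s12 s13 by blast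
  have c11: "11 \<in> S \<Longrightarrow> 5 \<in> S \<and> 7 \<in> S" using s14 s15 by blast
  have n1: "1 \<in> S \<Longrightarrow> 2 \<in> S \<or> 3 \<in> S" using s16 c6 c10 by blast
  have n5: "5 \<in> S \<Longrightarrow> 2 \<in> S \<or> 7 \<in> S" using s17 c6 c11 by blast
  have n9: "9 \<in> S \<Longrightarrow> 3 \<in> S \<or> 7 \<in> S" using s18 c10 c11 by blast
  have e0: "S = {}" if "2 \<notin> S" "3 \<notin> S" "7 \<notin> S"
  proof -
    have m: "1 \<notin> S" "5 \<notin> S" "6 \<notin> S" "9 \<notin> S" "10 \<notin> S" "11 \<notin> S" using that c2 c6 c3 c10 c7 c11 n1 n5 n9 by auto
    show ?thesis by (subst decomp[OF assms(1)]) (use m that n4 n8 n12 in auto)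
  qed
  have e1: "S = {1,2,5,6}" if "2 \<in> S" "3 \<notin> S" "7 \<notin> S"
  proof -
    have m: "1 \<in> S" "5 \<in> S" "6 \<in> S" "9 \<notin> S" "10 \<notin> S" "11 \<notin> S" using that c2 c6 c3 c10 c7 c11 n1 n5 n9 by auto
    show ?thesis by (subst decomp[OF assms(1)]) (use m that n4 n8 n12 in auto)
  qed
  have e2: "S = {1,3,9,10}" if "2 \<notin> S" "3 \<in> S" "7 \<notin> S"
  proof -
    have m: "1 \<in> S" "5 \<notin> S" "6 \<notin> S" "9 \<in> S" "10 \<in> S" "11 \<notin> S" using that c2 c6 c3 c10 c7 c11 n1 n5 n9 by auto
    show ?thesis by (subst decomp[OF assms(1)]) (use m that n4 n8 n12 in auto)
  qed
  have e3: "S = {5,7,9,11}" if "2 \<notin> S" "3 \<notin> S" "7 \<in> S"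
  proof -
    have m: "1 \<notin> S" "5 \<in> S" "6 \<notin> S" "9 \<in> S" "10 \<notin> S" "11 \<in> S" using that c2 c6 c3 c10 c7 c11 n1 n5 n9 by auto
    show ?thesis by (subst decomp[OF assms(1)]) (use m that n4 n8 n12 in auto)
  qed
  have e4: "S = {1,2,3,5,6,9,10}" if "2 \<in> S" "3 \<in> S" "7 \<notin> S"
  proof -
    have m: "1 \<in> S" "5 \<in> S" "6 \<in> S" "9 \<in> S" "10 \<in> S" "11 \<notin> S" using that c2 c6 c3 c10 c7 c11 n1 n5 n9 by auto
    show ?thesis by (subst decomp[OF assms(1)]) (use m that n4 n8 n12 in auto)
  qed
  have e5: "S = {1,2,5,6,7,9,11}" if "2 \<in> S" "3 \<notin> S" "7 \<in> S"
  proof -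
    have m: "1 \<in> S" "5 \<in> S" "6 \<in> S" "9 \<in> S" "10 \<notin> S" "11 \<in> S" using that c2 c6 c3 c10 c7 c11 n1 n5 n9 by auto
    show ?thesis by (subst decomp[OF assms(1)]) (use m that n4 n8 n12 in auto)
  qed
  have e6: "S = {1,3,5,7,9,10,11}" if "2 \<notin> S" "3 \<in> S" "7 \<in> S"
  proof -
    have m: "1 \<in> S" "5 \<in> S" "6 \<notin> S" "9 \<in> S" "10 \<in> S" "11 \<in> S" using that c2 c6 c3 c10 c7 c11 n1 n5 n9 by auto
    show ?thesis by (subst decomp[OF assms(1)]) (use m that n4 n8 n12 in auto)
  qed
  have e7: "S = {1,2,3,5,6,7,9,10,11}" if "2 \<in> S" "3 \<in> S" "7 \<in> S"
  proof -
    have m: "1 \<in> S" "5 \<in> S" "6 \<in> S" "9 \<in> S" "10 \<in> S" "11 \<in> S" using that c2 c6 c3 c10 c7 c11 n1 n5 n9 by auto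
    show ?thesis by (subst decomp[OF assms(1)]) (use m that n4 n8 n12 in auto)
  qed
  show ?thesis
    by (cases "2 \<in> S"; cases "3 \<in> S"; cases "7 \<in> S") (use e0 e1 e2 e3 e4 e5 e6 e7 in simp_all)
qed
lemma wit0: "independence_number Gu_edge {1,2,5,6} = clique_cover_number Gu_edge {1,2,5,6}"
  by (rule eq_witness2[where T="{1,2}" and Ps="[{1,5},{2,6}]"])
     (auto simp: indep_set_def clique_cover_def is_clique_def Gu_edge_iff)

lemma wit1: "independence_number Gu_edge {1,3,9,10} = clique_cover_number Gu_edge {1,3,9,10}"
  by (rule eq_witness2[where T="{1,3}" and Ps="[{1,9},{3,10}]"])
     (auto simp: indep_set_def clique_cover_def is_clique_def Gu_edge_iff)

lemma wit2: "independence_number Gu_edge {5,7,9,11} = clique_cover_number Gu_edge {5,7,9,11}"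
  by (rule eq_witness2[where T="{5,7}" and Ps="[{5,9},{7,11}]"])
     (auto simp: indep_set_def clique_cover_def is_clique_def Gu_edge_iff)

lemma wit3: "independence_number Gu_edge {1,2,3,5,6,9,10} = clique_cover_number Gu_edge {1,2,3,5,6,9,10}"
  by (rule eq_witness2[where T="{1,2,3}" and Ps="[{2,6},{3,10},{1,5,9}]"])
     (auto simp: indep_set_def clique_cover_def is_clique_def Gu_edge_iff)

lemma wit4: "independence_number Gu_edge {1,2,5,6,7,9,11} = clique_cover_number Gu_edge {1,2,5,6,7,9,11}"
  by (rule eq_witness2[where T="{1,2,7}" and Ps="[{2,6},{7,11},{1,5,9}]"])
     (auto simp: indep_set_def clique_cover_def is_clique_def Gu_edge_iff)

lemma wit5: "independence_number Gu_edge {1,3,5,7,9,10,11} = clique_cover_number Gu_edge {1,3,5,7,9,10,11}"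
  by (rule eq_witness2[where T="{1,3,7}" and Ps="[{3,10},{7,11},{1,5,9}]"])
     (auto simp: indep_set_def clique_cover_def is_clique_def Gu_edge_iff)

lemma wit6: "independence_number Gu_edge {1,2,3,5,6,7,9,10,11} = clique_cover_number Gu_edge {1,2,3,5,6,7,9,10,11}"
  by (rule eq_witness2[where T="{1,2,3,7}" and Ps="[{2,6},{3,10},{7,11},{1,5,9}]"])
     (auto simp: indep_set_def clique_cover_def is_clique_def Gu_edge_iff)

lemma main:
  "S \<subseteq> {1..12} \<Longrightarrow> independence_number Gu_edge S = clique_cover_number Gu_edge S"
proof (induction "card S" arbitrary: S rule: less_induct)
  case less
  have fin: "finite S" using less.prems finite_subset by blast
  show ?case
  proof (cases "\<exists>v. simpl S v")
    case True
    then obtain v where v: "simpl S v" by blast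
    define S' where "S' = S - insert v {a\<in>S. Gu_edge v a}"
    have vS: "v \<in> S" and cl: "is_clique Gu_edge (insert v {a\<in>S. Gu_edge v a})"
      using v by (auto simp: simpl_def)
    have "S' \<subset> S" using vS by (auto simp: S'_def)
    then have "card S' < card S" using fin by (simp add: psubset_card_mono)
    moreover have "S' \<subseteq> {1..12}" using less.prems by (auto simp: S'_def)
    ultimately have IH: "independence_number Gu_edge S' = clique_cover_number Gu_edge S'"
      using less.hyps by blast
    show ?thesis by (rule ruleA[OF fin vS Gu_sym cl IH[unfolded S'_def]])
  next
    case False
    then have "\<And>v. \<not> simpl S v" by blast
    from cases12[OF less.prems this] show ?thesis
    proof (elim disjE)
      assume "S = {}"
      then show ?thesis
        by (intro eq_witness[where T="{}" and P="{}"]) (auto simp: indep_set_def clique_cover_def)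
    qed (simp_all only: wit0 wit1 wit2 wit3 wit4 wit5 wit6)
  qed
qed

theorem theorem3:
  shows "perfect Gu_vertices Gu_edge"
  unfolding perfect_def Gu_vertices_def using main by blast

end
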